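(* Let $I=\{1,2\}$, $A=\{x,y\}$ with $x\ne y$, let $\mathcal C=\mathcal C(I,A,(\rho_i)_{i\in I},(C^a)_{a\in A})$ be a Cartan scheme with $\rho_1(x)=y$, $\rho_1(y)=x$, $\rho_2=\mathrm{id}_A$, and let $\mathcal R=\mathcal R(\mathcal C,(R^a)_{a\in A})$ be a root system of type $\mathcal C$. Then $\mathcal R$ is finite if and only if, up to interchanging $x$ and $y$, one of the following holds: (1) $C^x=C^y$ is of finite type $A_1\times A_1$, $B_2$ or $G_2$, i.e. $c^x_{12}=c^x_{21}=0$ or $c^x_{12}c^x_{21}\in\{2,3\}$; (2) $c^x_{12}=c^y_{12}=-1$, $c^x_{21}=-3$ and $c^y_{21}\in\{-4,-5\}$. In case (1), $R^x=R^y$ is the usual set of roots of the generalized Cartan matrix $C^x=C^y$. In case (2), writing $1^m2^n$ for $m\alpha_1+n\alpha_2$ (exponents $1$ and factors with exponent $0$ omitted), one has, if $c^y_{21}=-4$: $R^x_+=\{1,2,12,12^2,12^3,1^22^3,1^32^4,1^32^5\}$, $R^y_+=\{1,2,12,12^2,12^3,12^4,1^22^3,1^22^5\}$; and if $c^y_{21}=-5$: $R^x_+=\{1,2,12,12^2,12^3,1^22^3,1^32^4,1^32^5,1^42^5,1^42^7,1^52^7,1^52^8\}$, $R^y_+=\{1,2,12,12^2,12^3,12^4,12^5,1^22^3,1^22^5,1^22^7,1^32^7,1^32^8\}$.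
   Context: Let $\{\alpha_i\mid i\in I\}$ be the standard basis of $\mathbb Z^I$; $\mathbb N_0=\{0,1,2,\dots\}$. A generalized Cartan matrix is $C=(c_{ij})_{i,j\in I}\in\mathbb Z^{I\times I}$ with $c_{ii}=2$, $c_{jk}\le0$ for $j\ne k$, and $c_{ij}=0\Rightarrow c_{ji}=0$. A Cartan scheme $\mathcal C=\mathcal C(I,A,(\rho_i)_{i\in I},(C^a)_{a\in A})$ consists of a nonempty set $A$, maps $\rho_i:A\to A$ and generalized Cartan matrices $C^a=(c^a_{jk})_{j,k\in I}$ such that (C1) $\rho_i^2=\mathrm{id}$ and (C2) $c^a_{ij}=c^{\rho_i(a)}_{ij}$ for all $a\in A$, $i,j\in I$. For $i\in I$, $a\in A$ let $\sigma_i^a\in\mathrm{Aut}(\mathbb Z^I)$, $\sigma_i^a(\alpha_j)=\alpha_j-c^a_{ij}\alpha_i$. A root system of type $\mathcal C$ is a family $\mathcal R=\mathcal R(\mathcal C,(R^a)_{a\in A})$ of subsets $R^a\subset\mathbb Z^I$ such that, writing $R^a_+=R^a\cap\mathbb N_0^I$ and $m^a_{i,j}=|R^a\cap(\mathbb N_0\alpha_i+\mathbb N_0\alpha_j)|$, for all $a\in A$, $i,j\in I$: (R1) $R^a=R^a_+\cup(-R^a_+)$; (R2) $R^a\cap\mathbb Z\alpha_i=\{\alpha_i,-\alpha_i\}$; (R3) $\sigma_i^a(R^a)=R^{\rho_i(a)}$; (R4) if $i\neq j$ and $m^a_{i,j}$ is finite then $(\rho_i\rho_j)^{m^a_{i,j}}(a)=a$.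 It is finite if every $R^a$ is finite. *)

theory Defs
  imports Main
begin

text \<open>Vectors of Z^I are functions 'i => int vanishing outside I.\<close>

definition zvec :: "'i set \<Rightarrow> ('i \<Rightarrow> int) set" where
  "zvec I = {v. \<forall>i. i \<notin> I \<longrightarrow> v i = 0}"

definition alpha :: "'i \<Rightarrow> 'i \<Rightarrow> int" where
  "alpha i = (\<lambda>j. if j = i then 1 else 0)"

definition gcm :: "'i set \<Rightarrow> ('i \<Rightarrow> 'i \<Rightarrow> int) \<Rightarrow> bool" where
  "gcm I M \<longleftrightarrow> (\<forall>i\<in>I. M i i = 2) \<and> (\<forall>j\<in>I. \<forall>k\<in>I. j \<noteq> k \<longrightarrow> M j k \<le> 0)
     \<and> (\<forall>i\<in>I. \<forall>j\<in>I. M i j = 0 \<longrightarrow> M j i = 0)"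

definition cartan_scheme ::
  "'i set \<Rightarrow> 'a set \<Rightarrow> ('i \<Rightarrow> 'a \<Rightarrow> 'a) \<Rightarrow> ('a \<Rightarrow> 'i \<Rightarrow> 'i \<Rightarrow> int) \<Rightarrow> bool" where
  "cartan_scheme I A \<rho> C \<longleftrightarrow> A \<noteq> {}
     \<and> (\<forall>i\<in>I. \<forall>a\<in>A. \<rho> i a \<in> A)
     \<and> (\<forall>a\<in>A. gcm I (C a))
     \<and> (\<forall>i\<in>I. \<forall>a\<in>A. \<rho> i (\<rho> i a) = a)
     \<and> (\<forall>a\<in>A. \<forall>i\<in>I. \<forall>j\<in>I. C a i j = C (\<rho> i a) i j)"

text \<open>The reflection sigma_i for a matrix M: the linear map with
  alpha_j |-> alpha_j - M i j * alpha_i (j in I).\<close>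
definition refl :: "'i set \<Rightarrow> ('i \<Rightarrow> 'i \<Rightarrow> int) \<Rightarrow> 'i \<Rightarrow> ('i \<Rightarrow> int) \<Rightarrow> ('i \<Rightarrow> int)" where
  "refl I M i v = (\<lambda>k. v k - (if k = i then (\<Sum>j\<in>I. M i j * v j) else 0))"

definition pos_part :: "'i set \<Rightarrow> ('i \<Rightarrow> int) set \<Rightarrow> ('i \<Rightarrow> int) set" where
  "pos_part I S = {v \<in> S. \<forall>i\<in>I. v i \<ge> 0}"

definition cone2 :: "'i \<Rightarrow> 'i \<Rightarrow> ('i \<Rightarrow> int) set" where
  "cone2 i j = {v. \<exists>s t::int. s \<ge> 0 \<and> t \<ge> 0 \<and> v = (\<lambda>l. s * alpha i l + t * alpha j l)}"

definition root_system ::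
  "'i set \<Rightarrow> 'a set \<Rightarrow> ('i \<Rightarrow> 'a \<Rightarrow> 'a) \<Rightarrow> ('a \<Rightarrow> 'i \<Rightarrow> 'i \<Rightarrow> int)
     \<Rightarrow> ('a \<Rightarrow> ('i \<Rightarrow> int) set) \<Rightarrow> bool" where
  "root_system I A \<rho> C R \<longleftrightarrow> cartan_scheme I A \<rho> C
     \<and> (\<forall>a\<in>A. R a \<subseteq> zvec I)
     \<and> (\<forall>a\<in>A. R a = pos_part I (R a) \<union> uminus ` pos_part I (R a))
     \<and> (\<forall>a\<in>A. \<forall>i\<in>I. R a \<inter> range (\<lambda>k::int. \<lambda>l. k * alpha i l) = {alpha i, - alpha i})
     \<and> (\<forall>a\<in>A. \<forall>i\<in>I. refl I (C a) i ` R a = R (\<rho> i a))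
     \<and> (\<forall>a\<in>A. \<forall>i\<in>I. \<forall>j\<in>I. i \<noteq> j \<longrightarrow> finite (R a \<inter> cone2 i j) \<longrightarrow>
          ((\<rho> i \<circ> \<rho> j) ^^ card (R a \<inter> cone2 i j)) a = a)"

definition finite_root_system :: "'a set \<Rightarrow> ('a \<Rightarrow> ('i \<Rightarrow> int) set) \<Rightarrow> bool" where
  "finite_root_system A R \<longleftrightarrow> (\<forall>a\<in>A. finite (R a))"

inductive_set gcm_roots :: "'i set \<Rightarrow> ('i \<Rightarrow> 'i \<Rightarrow> int) \<Rightarrow> ('i \<Rightarrow> int) set"
  for I M where
  simple: "i \<in> I \<Longrightarrow> alpha i \<in> gcm_roots I M"
| reflect: "v \<in> gcm_roots I M \<Longrightarrow> i \<in> I \<Longrightarrow> refl I M i v \<in> gcm_roots I M"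

text \<open>Rank two: 1^m 2^n = m alpha_1 + n alpha_2, with I = {1,2} :: nat set.\<close>
definition r2 :: "int \<Rightarrow> int \<Rightarrow> nat \<Rightarrow> int" where
  "r2 m n = (\<lambda>k. if k = 1 then m else if k = 2 then n else 0)"

end

theory Submission
  imports Defs
begin


fun walk :: "('a \<Rightarrow> nat \<Rightarrow> nat \<Rightarrow> int) \<Rightarrow> (nat \<Rightarrow> 'a \<Rightarrow> 'a) \<Rightarrow> nat list \<Rightarrow> 'a \<Rightarrow> (nat \<Rightarrow> int) \<Rightarrow> (nat \<Rightarrow> int)" where
  "walk C \<rho> [] c w = w"
| "walk C \<rho> (i#is) c w = walk C \<rho> is (\<rho> i c) (refl {1,2} (C c) i w)"

fun wobj :: "(nat \<Rightarrow> 'a \<Rightarrow> 'a) \<Rightarrow> nat list \<Rightarrow> 'a \<Rightarrow> 'a" where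
  "wobj \<rho> [] c = c"
| "wobj \<rho> (i#is) c = wobj \<rho> is (\<rho> i c)"

fun hits :: "('a \<Rightarrow> nat \<Rightarrow> nat \<Rightarrow> int) \<Rightarrow> (nat \<Rightarrow> 'a \<Rightarrow> 'a) \<Rightarrow> nat list \<Rightarrow> 'a \<Rightarrow> (nat \<Rightarrow> int) \<Rightarrow> bool" where
  "hits C \<rho> [] c w = False"
| "hits C \<rho> (i#is) c w = (w = alpha i \<or> hits C \<rho> is (\<rho> i c) (refl {1,2} (C c) i w))"

definition nonneg :: "(nat \<Rightarrow> int) \<Rightarrow> bool" where
  "nonneg w \<longleftrightarrow> 0 \<le> w 1 \<and> 0 \<le> w 2"

lemma r2_apply[simp]: "r2 p q 1 = p" "r2 p q 2 = q" "r2 p q (Suc 0) = p"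
  by (auto simp: r2_def)

lemma r2_eq_iff[simp]: "r2 a b = r2 c d \<longleftrightarrow> a = c \<and> b = d"
  by (metis r2_apply)

lemma alpha_r2: "alpha (1::nat) = r2 1 0" "alpha (2::nat) = r2 0 1" "alpha (Suc 0) = r2 1 0"
  by (auto simp: alpha_def r2_def fun_eq_iff)

lemma nonneg_r2[simp]: "nonneg (r2 p q) \<longleftrightarrow> 0 \<le> p \<and> 0 \<le> q"
  by (simp add: nonneg_def)

lemma refl_r2_1: "refl {1,2} M 1 (r2 p q) = r2 (p - (M 1 1 * p + M 1 2 * q)) q"
  by (auto simp: refl_def r2_def fun_eq_iff)

lemma refl_r2_1': "refl {Suc 0,2} M (Suc 0) (r2 p q) = r2 (p - (M (Suc 0) (Suc 0) * p + M (Suc 0) 2 * q)) q"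
  by (auto simp: refl_def r2_def fun_eq_iff)

lemma refl_r2_2': "refl {Suc 0,2} M 2 (r2 p q) = r2 p (q - (M 2 (Suc 0) * p + M 2 2 * q))"
  by (auto simp: refl_def r2_def fun_eq_iff)

lemma refl_r2_2: "refl {1,2} M 2 (r2 p q) = r2 p (q - (M 2 1 * p + M 2 2 * q))"
  by (auto simp: refl_def r2_def fun_eq_iff)

lemma zvec_r2: "w \<in> zvec {1,2} \<Longrightarrow> w = r2 (w 1) (w 2)"
  by (auto simp: zvec_def r2_def fun_eq_iff)

lemma neg_r2[simp]: "- r2 p q = r2 (-p) (-q)"
  by (auto simp: r2_def fun_eq_iff)

lemma negneg_fun[simp]: "- (- (v::nat \<Rightarrow> int)) = v"
  by (simp add: fun_eq_iff)

lemma refl_invol: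
  fixes M :: "nat \<Rightarrow> nat \<Rightarrow> int"
  assumes "M i i = 2" "i \<in> {1,2}"
  shows "refl {1,2} M i (refl {1,2} M i w) = w"
  using assms by (auto simp: refl_def fun_eq_iff algebra_simps)

lemma refl_cong:
  fixes M N :: "nat \<Rightarrow> nat \<Rightarrow> int"
  assumes "\<forall>j\<in>{1,2}. M i j = N i j"
  shows "refl {1,2} M i = refl {1,2} N i"
  using assms by (auto simp: refl_def fun_eq_iff)

lemma refl_neg: "refl I M i (- w) = - refl I M i w"
  by (auto simp: refl_def fun_eq_iff sum_negf[symmetric])

lemma walk_lin:
  "walk C \<rho> is c (\<lambda>l. p * v l + q * w l) = (\<lambda>l. p * walk C \<rho> is c v l + q * walk C \<rho> is c w l)"
proof (induction "is" arbitrary: c v w)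
  case Nil then show ?case by simp
next
  case (Cons i "is")
  have "refl {1,2} (C c) i (\<lambda>l. p * v l + q * w l) =
     (\<lambda>l. p * refl {1,2} (C c) i v l + q * refl {1,2} (C c) i w l)"
    by (auto simp: refl_def fun_eq_iff algebra_simps sum_distrib_left sum.distrib)
  then show ?case using Cons by simp
qed

lemma r2_lin: "r2 p q = (\<lambda>l. p * r2 1 0 l + q * r2 0 1 l)"
  by (auto simp: r2_def fun_eq_iff)




locale rs2 =
  fixes x y :: 'a and \<rho> :: "nat \<Rightarrow> 'a \<Rightarrow> 'a" and C :: "'a \<Rightarrow> nat \<Rightarrow> nat \<Rightarrow> int"
    and R :: "'a \<Rightarrow> (nat \<Rightarrow> int) set"
  assumes xy: "x \<noteq> y" and rs: "root_system {1,2} {x,y} \<rho> C R"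
    and rho1x: "\<rho> 1 x = y" and rho1y: "\<rho> 1 y = x" and rho2: "\<forall>a\<in>{x,y}. \<rho> 2 a = a"
begin

lemmas P0 = rs[unfolded root_system_def]
lemmas parts = P0[THEN conjunct1] P0[THEN conjunct2, THEN conjunct1]
  P0[THEN conjunct2, THEN conjunct2, THEN conjunct1]
  P0[THEN conjunct2, THEN conjunct2, THEN conjunct2, THEN conjunct1]
  P0[THEN conjunct2, THEN conjunct2, THEN conjunct2, THEN conjunct2, THEN conjunct1]
  P0[THEN conjunct2, THEN conjunct2, THEN conjunct2, THEN conjunct2, THEN conjunct2]
lemmas P1 = parts(1)[unfolded cartan_scheme_def]
lemmas cparts = P1[THEN conjunct2, THEN conjunct2, THEN conjunct1]
   P1[THEN conjunct2, THEN conjunct2, THEN conjunct2, THEN conjunct2]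

lemma rho_in: "c \<in> {x,y} \<Longrightarrow> i \<in> {1,2} \<Longrightarrow> \<rho> i c \<in> {x,y}"
  using rho1x rho1y rho2 by auto

lemma rho_invol: "c \<in> {x,y} \<Longrightarrow> i \<in> {1,2} \<Longrightarrow> \<rho> i (\<rho> i c) = c"
  using rho1x rho1y rho2 by auto

lemma gcmC: "c \<in> {x,y} \<Longrightarrow> gcm {1,2} (C c)"
  using cparts(1) by blast

lemma diag: "c \<in> {x,y} \<Longrightarrow> C c 1 1 = 2" "c \<in> {x,y} \<Longrightarrow> C c 2 2 = 2"
  using gcmC by (auto simp: gcm_def)

lemma diag': "c \<in> {x,y} \<Longrightarrow> i \<in> {1,2} \<Longrightarrow> C c i i = 2"
  using diag by auto

lemma C2: "c \<in> {x,y} \<Longrightarrow> i \<in> {1,2} \<Longrightarrow> j \<in> {1,2} \<Longrightarrow> C (\<rho> i c) i j = C c i j"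
  using cparts(2) by metis

lemma C12: "C x 1 2 = C y 1 2"
  using C2[of x 1 2] rho1x by simp

lemma offdiag: "c \<in> {x,y} \<Longrightarrow> C c 1 2 \<le> 0" "c \<in> {x,y} \<Longrightarrow> C c 2 1 \<le> 0"
  using gcmC by (auto simp: gcm_def)

lemma zerosym: "c \<in> {x,y} \<Longrightarrow> C c 1 2 = 0 \<longleftrightarrow> C c 2 1 = 0"
  using gcmC by (auto simp: gcm_def)

lemma R_zvec: "c \<in> {x,y} \<Longrightarrow> R c \<subseteq> zvec {1,2}"
  using parts(2) by blast

lemma R_r2: "c \<in> {x,y} \<Longrightarrow> w \<in> R c \<Longrightarrow> w = r2 (w 1) (w 2)"
  using R_zvec zvec_r2 by blast

lemma R1: "c \<in> {x,y} \<Longrightarrow> R c = pos_part {1,2} (R c) \<union> uminus ` pos_part {1,2} (R c)"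
  using parts(3) by blast

lemma R2: "c \<in> {x,y} \<Longrightarrow> i \<in> {1,2} \<Longrightarrow> R c \<inter> range (\<lambda>k::int. \<lambda>l. k * alpha i l) = {alpha i, - alpha i}"
  using parts(4) by blast

lemma R3: "c \<in> {x,y} \<Longrightarrow> i \<in> {1,2} \<Longrightarrow> refl {1,2} (C c) i ` R c = R (\<rho> i c)"
  using parts(5) by blast

lemma R4: "c \<in> {x,y} \<Longrightarrow> finite (R c \<inter> cone2 1 2) \<Longrightarrow> ((\<rho> 1 \<circ> \<rho> 2) ^^ card (R c \<inter> cone2 1 2)) c = c"
proof -
  assume c: "c \<in> {x,y}" and f: "finite (R c \<inter> cone2 1 2)"
  have i: "(1::nat) \<in> {1,2}" "(2::nat) \<in> {1,2}" by auto
  from bspec[OF bspec[OF bspec[OF parts(6) c] i(1)] i(2)] f show ?thesis by simp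
qed

lemma simple_in: "c \<in> {x,y} \<Longrightarrow> i \<in> {1,2} \<Longrightarrow> alpha i \<in> R c"
  using R2 by blast

lemma refl_in: "c \<in> {x,y} \<Longrightarrow> i \<in> {1,2} \<Longrightarrow> w \<in> R c \<Longrightarrow> refl {1,2} (C c) i w \<in> R (\<rho> i c)"
  using R3 by blast

lemma sign: "c \<in> {x,y} \<Longrightarrow> w \<in> R c \<Longrightarrow> nonneg w \<or> nonneg (- w)"
proof -
  assume c: "c \<in> {x,y}" and w: "w \<in> R c"
  then have "w \<in> pos_part {1,2} (R c) \<union> uminus ` pos_part {1,2} (R c)" using R1[OF c] by simp
  then show ?thesis
  proof
    assume "w \<in> pos_part {1,2} (R c)" then show ?thesis by (simp add: pos_part_def nonneg_def)
  next
    assume "w \<in> uminus ` pos_part {1,2} (R c)"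
    then obtain v where "v \<in> pos_part {1,2} (R c)" "w = - v" by auto
    then show ?thesis by (simp add: pos_part_def nonneg_def)
  qed
qed

lemma neg_in: "c \<in> {x,y} \<Longrightarrow> w \<in> R c \<Longrightarrow> - w \<in> R c"
proof -
  assume c: "c \<in> {x,y}" and w: "w \<in> R c"
  then have "w \<in> pos_part {1,2} (R c) \<union> uminus ` pos_part {1,2} (R c)" using R1[OF c] by simp
  then show ?thesis
  proof
    assume "w \<in> pos_part {1,2} (R c)"
    then have "- w \<in> uminus ` pos_part {1,2} (R c)" by blast
    then show ?thesis using R1[OF c] by blast
  next
    assume "w \<in> uminus ` pos_part {1,2} (R c)"
    then obtain v where "v \<in> pos_part {1,2} (R c)" "w = - v" by auto
    then show ?thesis unfolding pos_part_def by auto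
  qed
qed

lemma line1: "c \<in> {x,y} \<Longrightarrow> r2 p 0 \<in> R c \<Longrightarrow> r2 p 0 = alpha 1 \<or> r2 p 0 = - alpha 1"
proof -
  assume c: "c \<in> {x,y}" and m: "r2 p 0 \<in> R c"
  have "r2 p 0 \<in> range (\<lambda>k::int. \<lambda>l. k * alpha 1 l)"
    by (rule range_eqI[of _ _ p]) (auto simp: r2_def alpha_def fun_eq_iff)
  then have "r2 p 0 \<in> {alpha 1, - alpha 1}" using R2[OF c, of 1] m by blast
  then show ?thesis by blast
qed

lemma line2: "c \<in> {x,y} \<Longrightarrow> r2 0 q \<in> R c \<Longrightarrow> r2 0 q = alpha 2 \<or> r2 0 q = - alpha 2"
proof -
  assume c: "c \<in> {x,y}" and m: "r2 0 q \<in> R c"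
  have "r2 0 q \<in> range (\<lambda>k::int. \<lambda>l. k * alpha 2 l)"
    by (rule range_eqI[of _ _ q]) (auto simp: r2_def alpha_def fun_eq_iff)
  then have "r2 0 q \<in> {alpha 2, - alpha 2}" using R2[OF c, of 2] m by blast
  then show ?thesis by blast
qed

lemma zero_notin: "c \<in> {x,y} \<Longrightarrow> r2 0 0 \<notin> R c"
  using line1[of c 0] by (auto simp: alpha_r2)

lemma mult_simple1: "c \<in> {x,y} \<Longrightarrow> r2 p 0 \<in> R c \<Longrightarrow> p = 1 \<or> p = -1"
  using line1[of c p] by (auto simp: alpha_r2)

lemma mult_simple2: "c \<in> {x,y} \<Longrightarrow> r2 0 q \<in> R c \<Longrightarrow> q = 1 \<or> q = -1"
  using line2[of c q] by (auto simp: alpha_r2)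

lemma positivity:
  assumes c: "c \<in> {x,y}" and i: "i \<in> {1,2}" and w: "w \<in> R c" and nn: "nonneg w"
    and ne: "w \<noteq> alpha i"
  shows "nonneg (refl {1,2} (C c) i w)"
proof -
  obtain p q where wpq: "w = r2 p q" using R_r2[OF c w] by blast
  have pq: "0 \<le> p" "0 \<le> q" using nn wpq by auto
  have img: "refl {1,2} (C c) i w \<in> R (\<rho> i c)" using refl_in[OF c i w] .
  have rc: "\<rho> i c \<in> {x,y}" using rho_in[OF c i] .
  show ?thesis
  proof (cases "i = 1")
    case True
    have "q \<noteq> 0"
    proof
      assume "q = 0"
      then have "p = 1 \<or> p = -1" using mult_simple1[OF c] w wpq by auto
      then show False using ne wpq True pq \<open>q = 0\<close> by (auto simp: alpha_r2)
    qed
    then have q: "q > 0" using pq by auto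
    from sign[OF rc img] show ?thesis using q True wpq by (auto simp: refl_r2_1 refl_r2_1')
  next
    case False
    then have i2: "i = 2" using i by auto
    have "p \<noteq> 0"
    proof
      assume "p = 0"
      then have "q = 1 \<or> q = -1" using mult_simple2[OF c] w wpq by auto
      then show False using ne wpq i2 pq \<open>p = 0\<close> by (auto simp: alpha_r2)
    qed
    then have p: "p > 0" using pq by auto
    from sign[OF rc img] show ?thesis using p i2 wpq by (auto simp: refl_r2_2 refl_r2_2')
  qed
qed

lemma hits_lemma:
  "c \<in> {x,y} \<Longrightarrow> set ws \<subseteq> {1,2} \<Longrightarrow> w \<in> R c \<Longrightarrow> nonneg w \<Longrightarrow> \<not> nonneg (walk C \<rho> ws c w)
   \<Longrightarrow> hits C \<rho> ws c w"
proof (induction ws arbitrary: c w)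
  case Nil then show ?case by simp
next
  case (Cons i ws)
  show ?case
  proof (cases "w = alpha i")
    case True then show ?thesis by simp
  next
    case False
    have i: "i \<in> {1,2}" using Cons by auto
    have "hits C \<rho> ws (\<rho> i c) (refl {1,2} (C c) i w)"
      using Cons.IH[OF rho_in[OF Cons(2) i] _ refl_in[OF Cons(2) i Cons(4)]
          positivity[OF Cons(2) i Cons(4) Cons(5) False]] Cons(3,6) by auto
    then show ?thesis by simp
  qed
qed

lemma hits_mem:
  "c \<in> {x,y} \<Longrightarrow> set ws \<subseteq> {1,2} \<Longrightarrow> hits C \<rho> ws c w \<Longrightarrow> w \<in> R c"
proof (induction ws arbitrary: c w)
  case Nil then show ?case by simp
next
  case (Cons i ws)
  have i: "i \<in> {1,2}" using Cons by auto
  show ?case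
  proof (cases "w = alpha i")
    case True then show ?thesis using simple_in[OF Cons(2) i] by simp
  next
    case False
    then have "hits C \<rho> ws (\<rho> i c) (refl {1,2} (C c) i w)" using Cons(4) by simp
    then have m: "refl {1,2} (C c) i w \<in> R (\<rho> i c)"
      using Cons.IH[OF rho_in[OF Cons(2) i]] Cons(3) by auto
    have "refl {1,2} (C (\<rho> i c)) i (refl {1,2} (C c) i w) \<in> R c"
      using refl_in[OF rho_in[OF Cons(2) i] i m] rho_invol[OF Cons(2) i] by simp
    moreover have "refl {1,2} (C (\<rho> i c)) i = refl {1,2} (C c) i"
      by (rule refl_cong) (use C2[OF Cons(2) i] in auto)
    ultimately show ?thesis using refl_invol[of "C c" i, OF diag'[OF Cons(2) i] i] by simp
  qed
qed

lemma pos_char: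
  assumes c: "c \<in> {x,y}" and ws: "set ws \<subseteq> {1,2}"
    and H1: "\<forall>p q. 0 \<le> p \<longrightarrow> 0 \<le> q \<longrightarrow> \<not> (p = 0 \<and> q = 0) \<longrightarrow> \<not> nonneg (walk C \<rho> ws c (r2 p q))"
    and H2: "\<forall>p q. 0 \<le> p \<longrightarrow> 0 \<le> q \<longrightarrow> hits C \<rho> ws c (r2 p q) \<longrightarrow> (p, q) \<in> S"
    and H3: "\<forall>(p,q)\<in>S. 0 \<le> p \<and> 0 \<le> q \<and> hits C \<rho> ws c (r2 p q)"
  shows "pos_part {1,2} (R c) = (\<lambda>(p,q). r2 p q) ` S"
proof
  show "pos_part {1,2} (R c) \<subseteq> (\<lambda>(p,q). r2 p q) ` S"
  proof
    fix w assume w: "w \<in> pos_part {1,2} (R c)"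
    then have wR: "w \<in> R c" and nn: "0 \<le> w 1" "0 \<le> w 2" by (auto simp: pos_part_def)
    obtain p q where wpq: "w = r2 p q" using R_r2[OF c wR] by blast
    have pq: "0 \<le> p" "0 \<le> q" using nn wpq by auto
    have nz: "\<not> (p = 0 \<and> q = 0)" using zero_notin[OF c] wR wpq by auto
    have "\<not> nonneg (walk C \<rho> ws c w)" using H1 pq nz wpq by blast
    then have "hits C \<rho> ws c w"
      using hits_lemma[OF c ws wR] nn by (simp add: nonneg_def)
    then have "(p,q) \<in> S" using H2 pq wpq by blast
    then show "w \<in> (\<lambda>(p,q). r2 p q) ` S" using wpq by force
  qed
next
  show "(\<lambda>(p,q). r2 p q) ` S \<subseteq> pos_part {1,2} (R c)"
  proof
    fix w assume "w \<in> (\<lambda>(p,q). r2 p q) ` S"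
    then obtain p q where pq: "(p,q) \<in> S" "w = r2 p q" by auto
    then have "0 \<le> p" "0 \<le> q" "hits C \<rho> ws c (r2 p q)" using H3 by auto
    then show "w \<in> pos_part {1,2} (R c)"
      using hits_mem[OF c ws] pq by (auto simp: pos_part_def)
  qed
qed

end


context rs2 begin

lemma cd_facts:
  assumes "c \<in> {x,y}" "d \<in> {x,y}" "c \<noteq> d"
  shows "\<rho> 1 c = d" "\<rho> 1 d = c" "\<rho> 2 c = c" "\<rho> 2 d = d" "C d 1 2 = C c 1 2"
    "C c 1 1 = 2" "C c 2 2 = 2" "C d 1 1 = 2" "C d 2 2 = 2"
  using assms rho1x rho1y rho2 C12 diag by auto

lemma conc_000:
  assumes cd: "c \<in> {x,y}" "d \<in> {x,y}" "c \<noteq> d"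
    and h: "C c 1 2 = 0" "C c 2 1 = 0" "C d 2 1 = 0"
  shows "pos_part {1,2} (R c) = (\<lambda>(p,q). r2 p q) ` {(1,0),(0,1)}"
    "\<forall>(p,q)\<in>{(1,0),(0,1)}. hits C \<rho> [1,2] c (r2 p q)"
proof -
  note f = cd_facts[OF cd]
  have h2: "C d 1 2 = 0" using f(5) h(1) by simp
  note simps = walk.simps hits.simps refl_r2_1 refl_r2_2 refl_r2_1' refl_r2_2' alpha_r2 f h h2
    f[simplified] h[simplified] h2[simplified]
  show "pos_part {1,2} (R c) = (\<lambda>(p,q). r2 p q) ` {(1,0),(0,1)}"
    apply (rule pos_char[OF cd(1), where ws="[1,2]"])
       apply simp
      apply (simp add: simps)
     apply (simp add: simps)
    apply (simp add: simps)
    done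
  show "\<forall>(p,q)\<in>{(1,0),(0,1)}. hits C \<rho> [1,2] c (r2 p q)"
    by (simp add: simps)
qed

lemma conc_122:
  assumes cd: "c \<in> {x,y}" "d \<in> {x,y}" "c \<noteq> d"
    and h: "C c 1 2 = -1" "C c 2 1 = -2" "C d 2 1 = -2"
  shows "pos_part {1,2} (R c) = (\<lambda>(p,q). r2 p q) ` {(1,0),(0,1),(1,1),(1,2)}"
    "\<forall>(p,q)\<in>{(1,0),(0,1),(1,1),(1,2)}. hits C \<rho> [1,2,1,2] c (r2 p q)"
proof -
  note f = cd_facts[OF cd]
  have h2: "C d 1 2 = -1" using f(5) h(1) by simp
  note simps = walk.simps hits.simps refl_r2_1 refl_r2_2 refl_r2_1' refl_r2_2' alpha_r2 f h h2
    f[simplified] h[simplified] h2[simplified]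
  show "pos_part {1,2} (R c) = (\<lambda>(p,q). r2 p q) ` {(1,0),(0,1),(1,1),(1,2)}"
    apply (rule pos_char[OF cd(1), where ws="[1,2,1,2]"])
       apply simp
      apply (simp add: simps)
     apply (simp add: simps)
    apply (simp add: simps)
    done
  show "\<forall>(p,q)\<in>{(1,0),(0,1),(1,1),(1,2)}. hits C \<rho> [1,2,1,2] c (r2 p q)"
    by (simp add: simps)
qed

lemma conc_211:
  assumes cd: "c \<in> {x,y}" "d \<in> {x,y}" "c \<noteq> d"
    and h: "C c 1 2 = -2" "C c 2 1 = -1" "C d 2 1 = -1"
  shows "pos_part {1,2} (R c) = (\<lambda>(p,q). r2 p q) ` {(1,0),(0,1),(1,1),(2,1)}"
    "\<forall>(p,q)\<in>{(1,0),(0,1),(1,1),(2,1)}. hits C \<rho> [1,2,1,2] c (r2 p q)"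
proof -
  note f = cd_facts[OF cd]
  have h2: "C d 1 2 = -2" using f(5) h(1) by simp
  note simps = walk.simps hits.simps refl_r2_1 refl_r2_2 refl_r2_1' refl_r2_2' alpha_r2 f h h2
    f[simplified] h[simplified] h2[simplified]
  show "pos_part {1,2} (R c) = (\<lambda>(p,q). r2 p q) ` {(1,0),(0,1),(1,1),(2,1)}"
    apply (rule pos_char[OF cd(1), where ws="[1,2,1,2]"])
       apply simp
      apply (simp add: simps)
     apply (simp add: simps)
    apply (simp add: simps)
    done
  show "\<forall>(p,q)\<in>{(1,0),(0,1),(1,1),(2,1)}. hits C \<rho> [1,2,1,2] c (r2 p q)"
    by (simp add: simps)
qed

lemma conc_133:
  assumes cd: "c \<in> {x,y}" "d \<in> {x,y}" "c \<noteq> d"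
    and h: "C c 1 2 = -1" "C c 2 1 = -3" "C d 2 1 = -3"
  shows "pos_part {1,2} (R c) = (\<lambda>(p,q). r2 p q) ` {(1,0),(0,1),(1,1),(1,2),(1,3),(2,3)}"
    "\<forall>(p,q)\<in>{(1,0),(0,1),(1,1),(1,2),(1,3),(2,3)}. hits C \<rho> [1,2,1,2,1,2] c (r2 p q)"
proof -
  note f = cd_facts[OF cd]
  have h2: "C d 1 2 = -1" using f(5) h(1) by simp
  note simps = walk.simps hits.simps refl_r2_1 refl_r2_2 refl_r2_1' refl_r2_2' alpha_r2 f h h2
    f[simplified] h[simplified] h2[simplified]
  show "pos_part {1,2} (R c) = (\<lambda>(p,q). r2 p q) ` {(1,0),(0,1),(1,1),(1,2),(1,3),(2,3)}"
    apply (rule pos_char[OF cd(1), where ws="[1,2,1,2,1,2]"])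
       apply simp
      apply (simp add: simps)
     apply (simp add: simps)
    apply (simp add: simps)
    done
  show "\<forall>(p,q)\<in>{(1,0),(0,1),(1,1),(1,2),(1,3),(2,3)}. hits C \<rho> [1,2,1,2,1,2] c (r2 p q)"
    by (simp add: simps)
qed

lemma conc_311:
  assumes cd: "c \<in> {x,y}" "d \<in> {x,y}" "c \<noteq> d"
    and h: "C c 1 2 = -3" "C c 2 1 = -1" "C d 2 1 = -1"
  shows "pos_part {1,2} (R c) = (\<lambda>(p,q). r2 p q) ` {(1,0),(0,1),(1,1),(2,1),(3,1),(3,2)}"
    "\<forall>(p,q)\<in>{(1,0),(0,1),(1,1),(2,1),(3,1),(3,2)}. hits C \<rho> [1,2,1,2,1,2] c (r2 p q)"
proof -
  note f = cd_facts[OF cd]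
  have h2: "C d 1 2 = -3" using f(5) h(1) by simp
  note simps = walk.simps hits.simps refl_r2_1 refl_r2_2 refl_r2_1' refl_r2_2' alpha_r2 f h h2
    f[simplified] h[simplified] h2[simplified]
  show "pos_part {1,2} (R c) = (\<lambda>(p,q). r2 p q) ` {(1,0),(0,1),(1,1),(2,1),(3,1),(3,2)}"
    apply (rule pos_char[OF cd(1), where ws="[1,2,1,2,1,2]"])
       apply simp
      apply (simp add: simps)
     apply (simp add: simps)
    apply (simp add: simps)
    done
  show "\<forall>(p,q)\<in>{(1,0),(0,1),(1,1),(2,1),(3,1),(3,2)}. hits C \<rho> [1,2,1,2,1,2] c (r2 p q)"
    by (simp add: simps)
qed

lemma conc_111:
  assumes cd: "c \<in> {x,y}" "d \<in> {x,y}" "c \<noteq> d"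
    and h: "C c 1 2 = -1" "C c 2 1 = -1" "C d 2 1 = -1"
  shows "pos_part {1,2} (R c) = (\<lambda>(p,q). r2 p q) ` {(1,0),(0,1),(1,1)}"
    "\<forall>(p,q)\<in>{(1,0),(0,1),(1,1)}. hits C \<rho> [1,2,1] c (r2 p q)"
proof -
  note f = cd_facts[OF cd]
  have h2: "C d 1 2 = -1" using f(5) h(1) by simp
  note simps = walk.simps hits.simps refl_r2_1 refl_r2_2 refl_r2_1' refl_r2_2' alpha_r2 f h h2
    f[simplified] h[simplified] h2[simplified]
  show "pos_part {1,2} (R c) = (\<lambda>(p,q). r2 p q) ` {(1,0),(0,1),(1,1)}"
    apply (rule pos_char[OF cd(1), where ws="[1,2,1]"])
       apply simp
      apply (simp add: simps)
     apply (simp add: simps)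
    apply (simp add: simps)
    done
  show "\<forall>(p,q)\<in>{(1,0),(0,1),(1,1)}. hits C \<rho> [1,2,1] c (r2 p q)"
    by (simp add: simps)
qed

lemma conc_134:
  assumes cd: "c \<in> {x,y}" "d \<in> {x,y}" "c \<noteq> d"
    and h: "C c 1 2 = -1" "C c 2 1 = -3" "C d 2 1 = -4"
  shows "pos_part {1,2} (R c) = (\<lambda>(p,q). r2 p q) ` {(1,0),(0,1),(1,1),(1,2),(1,3),(2,3),(3,4),(3,5)}"
    "\<forall>(p,q)\<in>{(1,0),(0,1),(1,1),(1,2),(1,3),(2,3),(3,4),(3,5)}. hits C \<rho> [1,2,1,2,1,2,1,2] c (r2 p q)"
proof -
  note f = cd_facts[OF cd]
  have h2: "C d 1 2 = -1" using f(5) h(1) by simp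
  note simps = walk.simps hits.simps refl_r2_1 refl_r2_2 refl_r2_1' refl_r2_2' alpha_r2 f h h2
    f[simplified] h[simplified] h2[simplified]
  show "pos_part {1,2} (R c) = (\<lambda>(p,q). r2 p q) ` {(1,0),(0,1),(1,1),(1,2),(1,3),(2,3),(3,4),(3,5)}"
    apply (rule pos_char[OF cd(1), where ws="[1,2,1,2,1,2,1,2]"])
       apply simp
      apply (simp add: simps)
     apply (simp add: simps)
    apply (simp add: simps)
    done
  show "\<forall>(p,q)\<in>{(1,0),(0,1),(1,1),(1,2),(1,3),(2,3),(3,4),(3,5)}. hits C \<rho> [1,2,1,2,1,2,1,2] c (r2 p q)"
    by (simp add: simps)
qed

lemma conc_143:
  assumes cd: "c \<in> {x,y}" "d \<in> {x,y}" "c \<noteq> d"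
    and h: "C c 1 2 = -1" "C c 2 1 = -4" "C d 2 1 = -3"
  shows "pos_part {1,2} (R c) = (\<lambda>(p,q). r2 p q) ` {(1,0),(0,1),(1,1),(1,2),(1,3),(1,4),(2,3),(2,5)}"
    "\<forall>(p,q)\<in>{(1,0),(0,1),(1,1),(1,2),(1,3),(1,4),(2,3),(2,5)}. hits C \<rho> [1,2,1,2,1,2,1,2] c (r2 p q)"
proof -
  note f = cd_facts[OF cd]
  have h2: "C d 1 2 = -1" using f(5) h(1) by simp
  note simps = walk.simps hits.simps refl_r2_1 refl_r2_2 refl_r2_1' refl_r2_2' alpha_r2 f h h2
    f[simplified] h[simplified] h2[simplified]
  show "pos_part {1,2} (R c) = (\<lambda>(p,q). r2 p q) ` {(1,0),(0,1),(1,1),(1,2),(1,3),(1,4),(2,3),(2,5)}"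
    apply (rule pos_char[OF cd(1), where ws="[1,2,1,2,1,2,1,2]"])
       apply simp
      apply (simp add: simps)
     apply (simp add: simps)
    apply (simp add: simps)
    done
  show "\<forall>(p,q)\<in>{(1,0),(0,1),(1,1),(1,2),(1,3),(1,4),(2,3),(2,5)}. hits C \<rho> [1,2,1,2,1,2,1,2] c (r2 p q)"
    by (simp add: simps)
qed

lemma conc_135:
  assumes cd: "c \<in> {x,y}" "d \<in> {x,y}" "c \<noteq> d"
    and h: "C c 1 2 = -1" "C c 2 1 = -3" "C d 2 1 = -5"
  shows "pos_part {1,2} (R c) = (\<lambda>(p,q). r2 p q) ` {(1,0),(0,1),(1,1),(1,2),(1,3),(2,3),(3,4),(3,5),(4,5),(4,7),(5,7),(5,8)}"
    "\<forall>(p,q)\<in>{(1,0),(0,1),(1,1),(1,2),(1,3),(2,3),(3,4),(3,5),(4,5),(4,7),(5,7),(5,8)}. hits C \<rho> [1,2,1,2,1,2,1,2,1,2,1,2] c (r2 p q)"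
proof -
  note f = cd_facts[OF cd]
  have h2: "C d 1 2 = -1" using f(5) h(1) by simp
  note simps = walk.simps hits.simps refl_r2_1 refl_r2_2 refl_r2_1' refl_r2_2' alpha_r2 f h h2
    f[simplified] h[simplified] h2[simplified]
  show "pos_part {1,2} (R c) = (\<lambda>(p,q). r2 p q) ` {(1,0),(0,1),(1,1),(1,2),(1,3),(2,3),(3,4),(3,5),(4,5),(4,7),(5,7),(5,8)}"
    apply (rule pos_char[OF cd(1), where ws="[1,2,1,2,1,2,1,2,1,2,1,2]"])
       apply simp
      apply (simp add: simps)
     apply (simp add: simps)
    apply (simp add: simps)
    done
  show "\<forall>(p,q)\<in>{(1,0),(0,1),(1,1),(1,2),(1,3),(2,3),(3,4),(3,5),(4,5),(4,7),(5,7),(5,8)}. hits C \<rho> [1,2,1,2,1,2,1,2,1,2,1,2] c (r2 p q)"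
    by (simp add: simps)
qed

lemma conc_153:
  assumes cd: "c \<in> {x,y}" "d \<in> {x,y}" "c \<noteq> d"
    and h: "C c 1 2 = -1" "C c 2 1 = -5" "C d 2 1 = -3"
  shows "pos_part {1,2} (R c) = (\<lambda>(p,q). r2 p q) ` {(1,0),(0,1),(1,1),(1,2),(1,3),(1,4),(1,5),(2,3),(2,5),(2,7),(3,7),(3,8)}"
    "\<forall>(p,q)\<in>{(1,0),(0,1),(1,1),(1,2),(1,3),(1,4),(1,5),(2,3),(2,5),(2,7),(3,7),(3,8)}. hits C \<rho> [1,2,1,2,1,2,1,2,1,2,1,2] c (r2 p q)"
proof -
  note f = cd_facts[OF cd]
  have h2: "C d 1 2 = -1" using f(5) h(1) by simp
  note simps = walk.simps hits.simps refl_r2_1 refl_r2_2 refl_r2_1' refl_r2_2' alpha_r2 f h h2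
    f[simplified] h[simplified] h2[simplified]
  show "pos_part {1,2} (R c) = (\<lambda>(p,q). r2 p q) ` {(1,0),(0,1),(1,1),(1,2),(1,3),(1,4),(1,5),(2,3),(2,5),(2,7),(3,7),(3,8)}"
    apply (rule pos_char[OF cd(1), where ws="[1,2,1,2,1,2,1,2,1,2,1,2]"])
       apply simp
      apply (simp add: simps)
     apply (simp add: simps)
    apply (simp add: simps)
    done
  show "\<forall>(p,q)\<in>{(1,0),(0,1),(1,1),(1,2),(1,3),(1,4),(1,5),(2,3),(2,5),(2,7),(3,7),(3,8)}. hits C \<rho> [1,2,1,2,1,2,1,2,1,2,1,2] c (r2 p q)"
    by (simp add: simps)
qed

end



type_synonym m4 = "int \<times> int \<times> int \<times> int"

fun app :: "m4 \<Rightarrow> int \<times> int \<Rightarrow> int \<times> int" where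
  "app (a,b,c,d) (p,q) = (a*p + b*q, c*p + d*q)"

fun mmul :: "m4 \<Rightarrow> m4 \<Rightarrow> m4" where
  "mmul (a,b,c,d) (a',b',c',d') = (a*a' + b*c', a*b' + b*d', c*a' + d*c', c*b' + d*d')"

fun mpow :: "m4 \<Rightarrow> nat \<Rightarrow> m4" where
  "mpow M 0 = (1,0,0,1)"
| "mpow M (Suc k) = mmul (mpow M k) M"

lemma app_mmul: "app (mmul A B) v = app A (app B v)"
  by (cases A; cases B; cases v) (simp add: algebra_simps)

fun ff :: "int \<Rightarrow> nat \<Rightarrow> int" where
  "ff t 0 = 0"
| "ff t (Suc 0) = 1"
| "ff t (Suc (Suc k)) = t * ff t (Suc k) - ff t k"

definition gg :: "int \<Rightarrow> nat \<Rightarrow> int" where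
  "gg t k = (if k = 0 then -1 else ff t (k - 1))"

lemma ch:
  assumes det: "a*d - b*c = 1"
  shows "mpow (a,b,c,d) k = (ff (a+d) k * a - gg (a+d) k, ff (a+d) k * b, ff (a+d) k * c, ff (a+d) k * d - gg (a+d) k)"
proof (induction k)
  case 0 then show ?case by (simp add: gg_def)
next
  case (Suc k)
  show ?case
  proof (cases k)
    case 0 then show ?thesis by (simp add: gg_def)
  next
    case (Suc k')
    have e: "ff (a+d) (Suc (Suc k')) = (a+d) * ff (a+d) (Suc k') - ff (a+d) k'" by simp
    have g1: "gg (a+d) (Suc k) = ff (a+d) (Suc k')" "gg (a+d) k = ff (a+d) k'" using Suc
      by (auto simp: gg_def)
    have dd: "a*d = 1 + b*c" using det by simp
    show ?thesis using Suc.IH Suc e g1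
      apply (simp add: algebra_simps)
      apply (subst mult.assoc[symmetric], subst dd)
      apply (simp add: algebra_simps)
      done
  qed
qed

lemma ff_grow:
  assumes t: "\<bar>t\<bar> \<ge> 2"
  shows "\<bar>ff t (Suc k)\<bar> \<ge> \<bar>ff t k\<bar> + 1"
proof (induction k rule: nat_less_induct)
  case (1 n)
  show ?case
  proof (cases n)
    case 0 then show ?thesis by simp
  next
    case (Suc m)
    have ih: "\<bar>ff t (Suc m)\<bar> \<ge> \<bar>ff t m\<bar> + 1" using 1 Suc by auto
    have "\<bar>t * ff t (Suc m)\<bar> = \<bar>t\<bar> * \<bar>ff t (Suc m)\<bar>" by (simp add: abs_mult)
    also have "\<dots> \<ge> 2 * \<bar>ff t (Suc m)\<bar>" using t by (simp add: mult_right_mono)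
    finally have "\<bar>t * ff t (Suc m)\<bar> \<ge> 2 * \<bar>ff t (Suc m)\<bar>" .
    then show ?thesis using ih Suc by (simp; linarith)
  qed
qed

lemma ff_mono:
  assumes t: "\<bar>t\<bar> \<ge> 2" and "i < j"
  shows "\<bar>ff t i\<bar> < \<bar>ff t j\<bar>"
  using assms(2)
proof (induction j)
  case 0 then show ?case by simp
next
  case (Suc j)
  have "\<bar>ff t (Suc j)\<bar> \<ge> \<bar>ff t j\<bar> + 1" using ff_grow[OF t] .
  then show ?case using Suc by (cases "i = j") auto
qed

lemma finite_order:
  assumes det: "a*d - b*c = 1" and eq: "mpow (a,b,c,d) i = mpow (a,b,c,d) j" and ij: "i < j"
  shows "\<bar>a + d\<bar> \<le> 1 \<or> (a,b,c,d) = (1,0,0,1) \<or> (a,b,c,d) = (-1,0,0,-1)"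
proof (rule ccontr)
  assume H: "\<not> ?thesis"
  have t: "\<bar>a+d\<bar> \<ge> 2"
  proof (rule ccontr)
    assume "\<not> \<bar>a+d\<bar> \<ge> 2"
    then show False using H by linarith
  qed
  define F where "F = ff (a+d) i - ff (a+d) j"
  have F: "F \<noteq> 0" using ff_mono[OF t ij] F_def by auto
  have e: "ff (a+d) i * b = ff (a+d) j * b" "ff (a+d) i * c = ff (a+d) j * c"
    "ff (a+d) i * a - gg (a+d) i = ff (a+d) j * a - gg (a+d) j"
    "ff (a+d) i * d - gg (a+d) i = ff (a+d) j * d - gg (a+d) j"
    using eq unfolding ch[OF det] by auto
  have "F * b = 0" "F * c = 0" "F * (a - d) = 0" using e unfolding F_def by (auto simp: algebra_simps)
  then have b: "b = 0" and c: "c = 0" and ad: "a = d" using F by auto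
  then have "a * a = 1" using det by simp
  then have "a = 1 \<or> a = -1" using zmult_eq_1_iff by auto
  then show False using H b c ad by auto
qed

lemma five_cases: "(1::int) \<le> a \<Longrightarrow> a \<le> 5 \<Longrightarrow> a = 1 \<or> a = 2 \<or> a = 3 \<or> a = 4 \<or> a = 5"
  by presburger

lemma le_prod: "(1::int) \<le> a \<Longrightarrow> 1 \<le> b \<Longrightarrow> a \<le> a * b"
  by (metis mult.right_neutral mult_left_mono zero_le_one order_trans)

lemma bound5:
  fixes u v :: int
  assumes "1 \<le> v" "(u-2)*(v-2) \<ge> 1" "(u-2)*(v-2) \<le> 3"
  shows "u \<le> 5"
proof (rule ccontr)
  assume "\<not> u \<le> 5"
  then have u: "u - 2 \<ge> 4" by simp
  show False
  proof (cases "v \<le> 2")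
    case True
    then have "(u-2)*(v-2) \<le> 0" using u by (intro mult_nonneg_nonpos) auto
    then show False using assms by simp
  next
    case False
    then have "v - 2 \<ge> 1" by simp
    then have "(u-2)*(v-2) \<ge> 4 * 1" using u by (intro mult_mono) auto
    then show False using assms by simp
  qed
qed

lemma enum125: "a = 1 \<or> a = 2 \<or> a = 3 \<or> a = 4 \<or> a = (5::int) \<Longrightarrow> b = 1 \<or> b = 2 \<or> b = 3 \<or> b = 4 \<or> b = 5 \<Longrightarrow> b' = 1 \<or> b' = 2 \<or> b' = 3 \<or> b' = 4 \<or> b' = 5 \<Longrightarrow> 1 \<le> (a * b - 2) * (a * b' - 2) \<Longrightarrow> (a * b - 2) * (a * b' - 2) \<le> 3 \<Longrightarrow> (a,b,b') \<in> {(0,0,0),(1,2,2),(2,1,1),(1,3,3),(3,1,1),(1,1,1),(1,3,4),(1,4,3),(1,3,5),(1,5,3)}"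
  by (elim disjE; simp)

lemma classify:
  fixes a b b' :: int
  assumes pos: "a \<ge> 0" "b \<ge> 0" "b' \<ge> 0" "a = 0 \<longleftrightarrow> b = 0" "a = 0 \<longleftrightarrow> b' = 0"
    and H: "\<bar>(1 - a*b') + (-a*b + (a*b-1)*(a*b'-1))\<bar> \<le> 1
      \<or> (1 - a*b', a*a*b' - 2*a, b - (a*b-1)*b', -a*b + (a*b-1)*(a*b'-1)) = (1,0,0,1)
      \<or> (1 - a*b', a*a*b' - 2*a, b - (a*b-1)*b', -a*b + (a*b-1)*(a*b'-1)) = (-1,0,0,-1)"
  shows "(a,b,b') \<in> {(0,0,0),(1,2,2),(2,1,1),(1,3,3),(3,1,1),(1,1,1),(1,3,4),(1,4,3),(1,3,5),(1,5,3)}"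
proof (cases "a = 0")
  case True then show ?thesis using pos by simp
next
  case False
  then have a1: "a \<ge> 1" and b1: "b \<ge> 1" and b'1: "b' \<ge> 1" using pos by auto
  have u1: "a*b \<ge> 1" and v1: "a*b' \<ge> 1" using le_prod[OF a1 b1] le_prod[OF a1 b'1] a1 by linarith+
  consider (A) "\<bar>(1 - a*b') + (-a*b + (a*b-1)*(a*b'-1))\<bar> \<le> 1"
    | (B) "(1 - a*b', a*a*b' - 2*a, b - (a*b-1)*b', -a*b + (a*b-1)*(a*b'-1)) = (1,0,0,1)"
    | (C) "(1 - a*b', a*a*b' - 2*a, b - (a*b-1)*b', -a*b + (a*b-1)*(a*b'-1)) = (-1,0,0,-1)"
    using H by blast
  then show ?thesis
  proof cases
    case A
    have tr: "(1 - a*b') + (-a*b + (a*b-1)*(a*b'-1)) = (a*b-2)*(a*b'-2) - 2"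
      by (simp add: algebra_simps)
    have P: "(a*b-2)*(a*b'-2) \<ge> 1" "(a*b-2)*(a*b'-2) \<le> 3" using A unfolding tr by linarith+
    have u5: "a*b \<le> 5" using bound5[OF v1 P] .
    have P': "(a*b'-2)*(a*b-2) \<ge> 1" "(a*b'-2)*(a*b-2) \<le> 3" using P mult.commute[of "a*b'-2" "a*b-2"] by linarith+
    have v5: "a*b' \<le> 5" using bound5[OF u1 P'] .
    have cm: "b*a = a*b" "b'*a = a*b'" by (rule mult.commute)+
    have "a \<le> 5" "b \<le> 5" "b' \<le> 5" using le_prod[OF a1 b1] le_prod[OF b1 a1] le_prod[OF b'1 a1] u5 v5 cm
      by linarith+
    then have ds: "a = 1 \<or> a = 2 \<or> a = 3 \<or> a = 4 \<or> a = 5" "b = 1 \<or> b = 2 \<or> b = 3 \<or> b = 4 \<or> b = 5"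
       "b' = 1 \<or> b' = 2 \<or> b' = 3 \<or> b' = 4 \<or> b' = 5"
      using five_cases[OF a1] five_cases[OF b1] five_cases[OF b'1] by auto
    show ?thesis by (rule enum125[OF ds P])
  next
    case B
    then have "1 - a*b' = 1" by (metis prod.inject)
    then have "a*b' = 0" by linarith
    then have False using v1 by linarith
    then show ?thesis by simp
  next
    case C
    then have e0: "1 - a*b' = -1" "b - (a*b-1)*b' = 0" by (metis prod.inject)+
    then have e: "a*b' = 2" "b = (a*b-1)*b'" by linarith+
    have cm: "b'*a = a*b'" by (rule mult.commute)
    have "a \<le> 2" using le_prod[OF a1 b'1] e by linarith
    then have "a = 1 \<or> a = 2" using a1 by presburger
    then have "(a = 1 \<and> b' = 2) \<or> (a = 2 \<and> b' = 1)" using e(1) by (elim disjE) simp_all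
    then show ?thesis using e by (elim disjE) simp_all
  qed
qed




lemma walk_append: "walk C \<rho> (xs @ ys) c w = walk C \<rho> ys (wobj \<rho> xs c) (walk C \<rho> xs c w)"
  by (induction xs arbitrary: c w) auto

lemma wobj_append: "wobj \<rho> (xs @ ys) c = wobj \<rho> ys (wobj \<rho> xs c)"
  by (induction xs arbitrary: c) auto

lemma app_unit: "app M (1,0) = (fst M, fst (snd (snd M)))" "app M (0,1) = (fst (snd M), snd (snd (snd M)))"
  by (cases M; auto)+

context rs2 begin

lemma walk_mem:
  "c \<in> {x,y} \<Longrightarrow> set ws \<subseteq> {1,2} \<Longrightarrow> w \<in> R c \<Longrightarrow> walk C \<rho> ws c w \<in> R (wobj \<rho> ws c) \<and> wobj \<rho> ws c \<in> {x,y}"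
proof (induction ws arbitrary: c w)
  case Nil then show ?case by simp
next
  case (Cons i ws)
  have i: "i \<in> {1,2}" using Cons by auto
  show ?case using Cons.IH[OF rho_in[OF Cons(2) i] _ refl_in[OF Cons(2) i Cons(4)]] Cons(3) by simp
qed

definition Tm :: m4 where
  "Tm = (1 - C x 1 2 * C y 2 1, 2 * C x 1 2 - C x 1 2 * C x 1 2 * C y 2 1,
         - C x 2 1 + (C x 1 2 * C x 2 1 - 1) * C y 2 1,
         - C x 1 2 * C x 2 1 + (C x 1 2 * C x 2 1 - 1) * (C x 1 2 * C y 2 1 - 1))"

lemma wobjT: "wobj \<rho> [1,2,1,2] x = x"
  using rho1x rho1y rho2 by simp

lemma walkT: "walk C \<rho> [1,2,1,2] x (r2 p q) = r2 (fst (app Tm (p,q))) (snd (app Tm (p,q)))"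
proof -
  have f: "\<rho> 1 x = y" "\<rho> 1 y = x" "\<rho> 2 x = x" "\<rho> 2 y = y" "C y 1 2 = C x 1 2"
    "C x 1 1 = 2" "C x 2 2 = 2" "C y 1 1 = 2" "C y 2 2 = 2"
    using rho1x rho1y rho2 C12 diag by auto
  note simps = walk.simps refl_r2_1 refl_r2_2 refl_r2_1' refl_r2_2' f f[simplified]
  show ?thesis
    by (simp add: simps Tm_def) (simp add: algebra_simps)
qed

lemma detT: "fst Tm * snd (snd (snd Tm)) - fst (snd Tm) * fst (snd (snd Tm)) = 1"
  by (simp add: Tm_def algebra_simps)

lemma walk_rep:
  "walk C \<rho> (concat (replicate k [1,2,1,2])) x (r2 p q) = r2 (fst (app (mpow Tm k) (p,q))) (snd (app (mpow Tm k) (p,q)))"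
proof (induction k arbitrary: p q)
  case 0 then show ?case by (cases Tm) simp
next
  case (Suc k)
  have "walk C \<rho> (concat (replicate (Suc k) [1,2,1,2])) x (r2 p q)
      = walk C \<rho> (concat (replicate k [1,2,1,2])) x (walk C \<rho> [1,2,1,2] x (r2 p q))"
    by (simp only: replicate_Suc concat.simps walk_append wobjT)
  also have "\<dots> = r2 (fst (app (mpow Tm k) (app Tm (p,q)))) (snd (app (mpow Tm k) (app Tm (p,q))))"
    unfolding walkT using Suc.IH by simp
  also have "\<dots> = r2 (fst (app (mpow Tm (Suc k)) (p,q))) (snd (app (mpow Tm (Suc k)) (p,q)))"
    by (simp add: app_mmul)
  finally show ?case .
qed

lemma wobj_rep: "wobj \<rho> (concat (replicate k [1,2,1,2])) x = x"
  by (induction k) (simp_all only: replicate_Suc concat.simps wobj_append wobjT replicate_0 concat.simps, simp)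

lemma fin_mpow:
  assumes fin: "finite (R x)"
  shows "\<exists>i j. i < j \<and> mpow Tm i = mpow Tm j"
proof -
  define P where "P = (\<lambda>w. (w 1, w 2)) ` R x"
  have finP: "finite P" using fin P_def by simp
  have inP: "app (mpow Tm k) v \<in> P" if "v = (1,0) \<or> v = (0,1)" for k v
  proof -
    obtain p q where v: "v = (p,q)" by (cases v)
    have pq: "r2 p q \<in> R x"
      using that v simple_in[of x 1] simple_in[of x 2] by (auto simp: alpha_r2)
    have set: "set (concat (replicate k [1::nat,2,1,2])) \<subseteq> {1,2}" by auto
    have "walk C \<rho> (concat (replicate k [1,2,1,2])) x (r2 p q) \<in> R x"
      using walk_mem[OF _ set pq] wobj_rep by auto
    then have "r2 (fst (app (mpow Tm k) (p,q))) (snd (app (mpow Tm k) (p,q))) \<in> R x"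
      by (simp only: walk_rep)
    then show ?thesis unfolding P_def v by (metis (no_types, lifting) image_eqI prod.collapse r2_apply(1,2))
  qed
  define h :: "(int \<times> int) \<times> (int \<times> int) \<Rightarrow> m4" where "h = (\<lambda>((a,c),(b,d)). (a,b,c,d))"
  have "range (mpow Tm) \<subseteq> h ` (P \<times> P)"
  proof
    fix M assume "M \<in> range (mpow Tm)"
    then obtain k where k: "M = mpow Tm k" by auto
    have "(app M (1,0), app M (0,1)) \<in> P \<times> P" using inP k by auto
    moreover have "M = h (app M (1,0), app M (0,1))"
      by (cases M) (auto simp: h_def)
    ultimately show "M \<in> h ` (P \<times> P)" by blast
  qed
  then have "finite (range (mpow Tm))" using finP by (meson finite_SigmaI finite_imageI finite_subset)
  then have "\<not> inj (mpow Tm)" using finite_imageD infinite_UNIV_nat by blast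
  then obtain i j where "i \<noteq> j" "mpow Tm i = mpow Tm j" unfolding inj_def by blast
  then show ?thesis by (metis linorder_neq_iff)
qed

lemma finite_classify:
  assumes fin: "finite (R x)"
  shows "(- C x 1 2, - C x 2 1, - C y 2 1) \<in> {(0,0,0),(1,2,2),(2,1,1),(1,3,3),(3,1,1),(1,1,1),(1,3,4),(1,4,3),(1,3,5),(1,5,3)}"
proof -
  obtain i j where ij: "i < j" "mpow Tm i = mpow Tm j" using fin_mpow[OF fin] by blast
  obtain t11 t12 t21 t22 where T: "Tm = (t11,t12,t21,t22)" by (cases Tm) auto
  have det: "t11*t22 - t12*t21 = 1" using detT T by simp
  have fo: "\<bar>t11 + t22\<bar> \<le> 1 \<or> (t11,t12,t21,t22) = (1,0,0,1) \<or> (t11,t12,t21,t22) = (-1,0,0,-1)"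
    using finite_order[OF det _ ij(1)] ij(2) T by simp
  have tt: "t11 = 1 - C x 1 2 * C y 2 1" "t12 = 2 * C x 1 2 - C x 1 2 * C x 1 2 * C y 2 1"
     "t21 = - C x 2 1 + (C x 1 2 * C x 2 1 - 1) * C y 2 1"
     "t22 = - C x 1 2 * C x 2 1 + (C x 1 2 * C x 2 1 - 1) * (C x 1 2 * C y 2 1 - 1)"
    using T by (simp_all add: Tm_def)
  have c12: "C y 1 2 = C x 1 2" using C12 by simp
  show ?thesis
  proof (rule classify)
    show "- C x 1 2 \<ge> 0" "- C x 2 1 \<ge> 0" "- C y 2 1 \<ge> 0" using offdiag[of x] offdiag[of y] by auto
    show "(- C x 1 2 = 0) = (- C x 2 1 = 0)" using zerosym[of x] by auto
    show "(- C x 1 2 = 0) = (- C y 2 1 = 0)" using zerosym[of y] c12 by auto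
    show "\<bar>1 - - C x 1 2 * - C y 2 1 + (- (- C x 1 2) * - C x 2 1 + (- C x 1 2 * - C x 2 1 - 1) * (- C x 1 2 * - C y 2 1 - 1))\<bar> \<le> 1 \<or>
    (1 - - C x 1 2 * - C y 2 1, - C x 1 2 * - C x 1 2 * - C y 2 1 - 2 * - C x 1 2, - C x 2 1 - (- C x 1 2 * - C x 2 1 - 1) * - C y 2 1,
     - (- C x 1 2) * - C x 2 1 + (- C x 1 2 * - C x 2 1 - 1) * (- C x 1 2 * - C y 2 1 - 1)) =
    (1, 0, 0, 1) \<or>
    (1 - - C x 1 2 * - C y 2 1, - C x 1 2 * - C x 1 2 * - C y 2 1 - 2 * - C x 1 2, - C x 2 1 - (- C x 1 2 * - C x 2 1 - 1) * - C y 2 1,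
     - (- C x 1 2) * - C x 2 1 + (- C x 1 2 * - C x 2 1 - 1) * (- C x 1 2 * - C y 2 1 - 1)) =
    (- 1, 0, 0, - 1)"
      using fo unfolding tt by (simp add: algebra_simps)
  qed
qed

lemma cone_eq: "c \<in> {x,y} \<Longrightarrow> R c \<inter> cone2 1 2 = pos_part {1,2} (R c)"
proof (intro equalityI subsetI)
  fix w assume c: "c \<in> {x,y}" and w': "w \<in> R c \<inter> cone2 1 2"
  then have w: "w \<in> R c" "w \<in> cone2 1 2" by auto
  then obtain s t :: int where st: "s \<ge> 0" "t \<ge> 0" "w = (\<lambda>l. s * alpha 1 l + t * alpha 2 l)"
    unfolding cone2_def by blast
  then show "w \<in> pos_part {1,2} (R c)" using w by (auto simp: pos_part_def alpha_def)
next
  fix w assume c: "c \<in> {x,y}" and w: "w \<in> pos_part {1,2} (R c)"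
  have wR: "w \<in> R c" and nn: "0 \<le> w 1" "0 \<le> w 2" using w by (auto simp: pos_part_def)
  have "w = (\<lambda>l. w 1 * alpha 1 l + w 2 * alpha 2 l)"
    using R_zvec[OF c] wR by (auto simp: zvec_def alpha_def fun_eq_iff)
  then have "w \<in> cone2 1 2" unfolding cone2_def using nn by blast
  then show "w \<in> R c \<inter> cone2 1 2" using wR by blast
qed

lemma not_A2: "\<not> (C x 1 2 = -1 \<and> C x 2 1 = -1 \<and> C y 2 1 = -1)"
proof
  assume h: "C x 1 2 = -1 \<and> C x 2 1 = -1 \<and> C y 2 1 = -1"
  have pp: "pos_part {1,2} (R x) = (\<lambda>(p,q). r2 p q) ` {(1,0),(0,1),(1,1)}"
    using conc_111(1)[of x y] h xy by auto
  have e: "R x \<inter> cone2 1 2 = (\<lambda>(p,q). r2 p q) ` {(1,0),(0,1),(1,1)}" using cone_eq[of x] pp by simp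
  have c3: "card (R x \<inter> cone2 1 2) = 3" unfolding e by simp
  have "finite (R x \<inter> cone2 1 2)" unfolding e by simp
  then have "((\<rho> 1 \<circ> \<rho> 2) ^^ card (R x \<inter> cone2 1 2)) x = x" by (rule R4[rotated]) simp
  then have "((\<rho> 1 \<circ> \<rho> 2) ^^ 3) x = x" unfolding c3 .
  then show False using rho1x rho1y rho2 xy by (simp add: numeral_3_eq_3)
qed

lemma fin_pos: "c \<in> {x,y} \<Longrightarrow> pos_part {1,2} (R c) = (\<lambda>(p,q). r2 p q) ` S \<Longrightarrow> finite S \<Longrightarrow> finite (R c)"
  using R1[of c] by (metis finite_Un finite_imageI)

lemma hits_gcm:
  assumes M: "\<forall>c\<in>{x,y}. \<forall>i\<in>{1,2}. \<forall>j\<in>{1,2}. C c i j = M i j"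
  shows "c \<in> {x,y} \<Longrightarrow> set ws \<subseteq> {1,2} \<Longrightarrow> hits C \<rho> ws c w \<Longrightarrow> w \<in> gcm_roots {1,2} M"
proof (induction ws arbitrary: c w)
  case Nil then show ?case by simp
next
  case (Cons i ws)
  have i: "i \<in> {1,2}" using Cons by auto
  show ?case
  proof (cases "w = alpha i")
    case True then show ?thesis using gcm_roots.simple[OF i] by simp
  next
    case False
    then have "hits C \<rho> ws (\<rho> i c) (refl {1,2} (C c) i w)" using Cons(4) by simp
    then have m: "refl {1,2} (C c) i w \<in> gcm_roots {1,2} M"
      using Cons.IH[OF rho_in[OF Cons(2) i]] Cons(3) by auto
    have eq: "refl {1,2} (C c) i = refl {1,2} M i"
      by (rule refl_cong) (use M Cons(2) i in auto)
    have Mii: "M i i = 2" using M diag'[OF Cons(2) i] Cons(2) i by auto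
    have "refl {1,2} M i (refl {1,2} M i w) \<in> gcm_roots {1,2} M"
      using gcm_roots.reflect[OF m[unfolded eq] i] .
    then show ?thesis using refl_invol[of M i, OF Mii i] by simp
  qed
qed

lemma gcm_neg:
  fixes M :: "nat \<Rightarrow> nat \<Rightarrow> int"
  assumes M: "M 1 1 = 2" "M 2 2 = 2"
  shows "w \<in> gcm_roots {1,2} M \<Longrightarrow> - w \<in> gcm_roots {1,2} M"
proof (induction rule: gcm_roots.induct)
  case (simple i)
  have eq: "refl {1,2} M i (alpha i) = - alpha i"
    using simple M by (auto simp: alpha_r2 refl_r2_1 refl_r2_2 refl_r2_1' refl_r2_2')
  have "refl {1,2} M i (alpha i) \<in> gcm_roots {1,2} M"
    by (rule gcm_roots.reflect[OF gcm_roots.simple[OF simple] simple])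
  then show ?case unfolding eq .
next
  case (reflect v i)
  have i: "i \<in> {1,2}" using reflect by simp
  have nv: "- v \<in> gcm_roots {1,2} M" using reflect by blast
  have "refl {1,2} M i (- v) \<in> gcm_roots {1,2} M" by (rule gcm_roots.reflect[OF nv i])
  then show ?case unfolding refl_neg .
qed

lemma case1_gcm:
  assumes uv: "u \<in> {x,y}" "v \<in> {x,y}" "u \<noteq> v"
    and same: "\<forall>i\<in>{1,2}. \<forall>j\<in>{1,2}. C u i j = C v i j"
    and pu: "pos_part {1,2} (R u) = (\<lambda>(p,q). r2 p q) ` S"
    and pv: "pos_part {1,2} (R v) = (\<lambda>(p,q). r2 p q) ` S"
    and hu: "\<forall>(p,q)\<in>S. hits C \<rho> ws u (r2 p q)" and ws: "set ws \<subseteq> {1,2}"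
  shows "R u = R v \<and> R u = gcm_roots {1,2} (C u)"
proof -
  have RR: "R u = R v" using R1[OF uv(1)] R1[OF uv(2)] pu pv by simp
  have M: "\<forall>c\<in>{x,y}. \<forall>i\<in>{1,2}. \<forall>j\<in>{1,2}. C c i j = C u i j"
    using same uv by auto
  have Mii: "C u 1 1 = 2" "C u 2 2 = 2" using diag uv by auto
  have posg: "w \<in> gcm_roots {1,2} (C u)" if "w \<in> pos_part {1,2} (R u)" for w
    using that pu hu hits_gcm[OF M uv(1) ws] by auto
  have sub1: "R u \<subseteq> gcm_roots {1,2} (C u)"
  proof
    fix w assume "w \<in> R u"
    then have "w \<in> pos_part {1,2} (R u) \<union> uminus ` pos_part {1,2} (R u)" using R1[OF uv(1)] by simp
    then show "w \<in> gcm_roots {1,2} (C u)"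
      using posg gcm_neg[of "C u", OF Mii] by auto
  qed
  have sub2: "w \<in> R u" if "w \<in> gcm_roots {1,2} (C u)" for w
    using that
  proof (induction rule: gcm_roots.induct)
    case (simple i) then show ?case using simple_in[OF uv(1)] by simp
  next
    case (reflect w i)
    have i: "i \<in> {1,2}" and wR: "w \<in> R u" using reflect by simp_all
    have "\<rho> i u \<in> {u,v}" using rho_in[OF uv(1) i] uv by auto
    then have "R (\<rho> i u) = R u" using RR by auto
    then show ?case using refl_in[OF uv(1) i wR] by simp
  qed
  show ?thesis using RR sub1 sub2 by blast
qed

end



definition c1 :: "('a \<Rightarrow> nat \<Rightarrow> nat \<Rightarrow> int) \<Rightarrow> 'a \<Rightarrow> 'a \<Rightarrow> bool" where
  "c1 C u v \<longleftrightarrow> (\<forall>i\<in>{1,2}. \<forall>j\<in>{1,2}. C u i j = C v i j)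
              \<and> ((C u 1 2 = 0 \<and> C u 2 1 = 0) \<or> C u 1 2 * C u 2 1 \<in> {2,3})"

definition c2 :: "('a \<Rightarrow> nat \<Rightarrow> nat \<Rightarrow> int) \<Rightarrow> 'a \<Rightarrow> 'a \<Rightarrow> bool" where
  "c2 C u v \<longleftrightarrow> C u 1 2 = -1 \<and> C v 1 2 = -1 \<and> C u 2 1 = -3 \<and> C v 2 1 \<in> {-4,-5}"

lemma pair_classify:
  fixes a b :: int
  assumes "a \<ge> 0" "b \<ge> 0" "a * b \<in> {2,3}"
  shows "(a,b) \<in> {(1,2),(2,1),(1,3),(3,1)}"
proof -
  have "a \<noteq> 0" "b \<noteq> 0" using assms(3) by auto
  then have a1: "a \<ge> 1" and b1: "b \<ge> 1" using assms(1,2) by linarith+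
  have "a \<le> 3" "b \<le> 3" using le_prod[OF a1 b1] le_prod[OF b1 a1] assms(3) mult.commute[of a b] by auto
  then have "a = 1 \<or> a = 2 \<or> a = 3" "b = 1 \<or> b = 2 \<or> b = 3" using a1 b1 by presburger+
  then show ?thesis using assms(3) by (elim disjE; simp)
qed

context rs2 begin

lemma fwd:
  assumes fin: "finite (R x)"
  shows "\<exists>u v. {u,v} = {x,y} \<and> u \<noteq> v \<and> (c1 C u v \<or> c2 C u v)"
proof -
  have m: "(- C x 1 2, - C x 2 1, - C y 2 1) \<in> {(0,0,0),(1,2,2),(2,1,1),(1,3,3),(3,1,1),(1,1,1),(1,3,4),(1,4,3),(1,3,5),(1,5,3)}"
    by (rule finite_classify[OF fin])
  have c12: "C y 1 2 = C x 1 2" using C12 by simp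
  have dg: "C x 1 1 = 2" "C x 2 2 = 2" "C y 1 1 = 2" "C y 2 2 = 2" using diag by auto
  have A2: "\<not> (C x 1 2 = -1 \<and> C x 2 1 = -1 \<and> C y 2 1 = -1)" by (rule not_A2)
  have same: "C x 2 1 = C y 2 1 \<Longrightarrow> \<forall>i\<in>{1,2}. \<forall>j\<in>{1,2}. C x i j = C y i j"
    using c12 dg by auto
  show ?thesis
  proof (cases "C x 2 1 = C y 2 1")
    case True
    then have "c1 C x y"
      using m same[OF True] A2 unfolding c1_def by auto
    then show ?thesis using xy by blast
  next
    case False
    then have "c2 C x y \<or> c2 C y x" using m c12 unfolding c2_def by auto
    then show ?thesis using xy by (metis insert_commute)
  qed
qed

lemma c1_generic:
  assumes uv: "u \<in> {x,y}" "v \<in> {x,y}" "u \<noteq> v"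
    and same: "\<forall>i\<in>{1,2}. \<forall>j\<in>{1,2}. C u i j = C v i j"
    and pu: "pos_part {1,2} (R u) = (\<lambda>(p,q). r2 p q) ` S"
    and pv: "pos_part {1,2} (R v) = (\<lambda>(p,q). r2 p q) ` S"
    and hu: "\<forall>(p,q)\<in>S. hits C \<rho> ws u (r2 p q)" and ws: "set ws \<subseteq> {1,2}" and fS: "finite S"
  shows "finite (R u) \<and> finite (R v) \<and> R u = R v \<and> R u = gcm_roots {1,2} (C u)"
  using case1_gcm[OF uv same pu pv hu ws] fin_pos[OF uv(1) pu fS] fin_pos[OF uv(2) pv fS] by blast

lemma bwd1:
  assumes uv: "u \<in> {x,y}" "v \<in> {x,y}" "u \<noteq> v" and h: "c1 C u v"
  shows "finite (R u) \<and> finite (R v) \<and> R u = R v \<and> R u = gcm_roots {1,2} (C u)"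
proof -
  have same: "\<forall>i\<in>{1,2}. \<forall>j\<in>{1,2}. C u i j = C v i j" using h unfolding c1_def by blast
  have e: "C v 1 2 = C u 1 2" "C v 2 1 = C u 2 1" using same by auto
  have nn: "- C u 1 2 \<ge> 0" "- C u 2 1 \<ge> 0" using offdiag[OF uv(1)] by auto
  have "(C u 1 2 = 0 \<and> C u 2 1 = 0) \<or> (- C u 1 2, - C u 2 1) \<in> {(1,2),(2,1),(1,3),(3,1)}"
    using h pair_classify[OF nn] unfolding c1_def by auto
  then consider "C u 1 2 = 0 \<and> C u 2 1 = 0" | "C u 1 2 = -1 \<and> C u 2 1 = -2" | "C u 1 2 = -2 \<and> C u 2 1 = -1"
    | "C u 1 2 = -1 \<and> C u 2 1 = -3" | "C u 1 2 = -3 \<and> C u 2 1 = -1" by auto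
  then show ?thesis
  proof cases
    case 1
    show ?thesis by (rule c1_generic[OF uv same conc_000(1)[OF uv] conc_000(1)[of v u] conc_000(2)[OF uv]])
      (use 1 e uv in auto)
  next
    case 2
    show ?thesis by (rule c1_generic[OF uv same conc_122(1)[OF uv] conc_122(1)[of v u] conc_122(2)[OF uv]])
      (use 2 e uv in auto)
  next
    case 3
    show ?thesis by (rule c1_generic[OF uv same conc_211(1)[OF uv] conc_211(1)[of v u] conc_211(2)[OF uv]])
      (use 3 e uv in auto)
  next
    case 4
    show ?thesis by (rule c1_generic[OF uv same conc_133(1)[OF uv] conc_133(1)[of v u] conc_133(2)[OF uv]])
      (use 4 e uv in auto)
  next
    case 5
    show ?thesis by (rule c1_generic[OF uv same conc_311(1)[OF uv] conc_311(1)[of v u] conc_311(2)[OF uv]])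
      (use 5 e uv in auto)
  qed
qed

lemma bwd2:
  assumes uv: "u \<in> {x,y}" "v \<in> {x,y}" "u \<noteq> v" and h: "c2 C u v"
  shows "finite (R u) \<and> finite (R v)"
    "C v 2 1 = -4 \<Longrightarrow> pos_part {1,2} (R u) = {r2 1 0, r2 0 1, r2 1 1, r2 1 2, r2 1 3, r2 2 3, r2 3 4, r2 3 5}
             \<and> pos_part {1,2} (R v) = {r2 1 0, r2 0 1, r2 1 1, r2 1 2, r2 1 3, r2 1 4, r2 2 3, r2 2 5}"
    "C v 2 1 = -5 \<Longrightarrow> pos_part {1,2} (R u) = {r2 1 0, r2 0 1, r2 1 1, r2 1 2, r2 1 3, r2 2 3, r2 3 4, r2 3 5,
                                       r2 4 5, r2 4 7, r2 5 7, r2 5 8}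
             \<and> pos_part {1,2} (R v) = {r2 1 0, r2 0 1, r2 1 1, r2 1 2, r2 1 3, r2 1 4, r2 1 5, r2 2 3,
                                       r2 2 5, r2 2 7, r2 3 7, r2 3 8}"
proof -
  have vu: "v \<in> {x,y}" "u \<in> {x,y}" "v \<noteq> u" using uv by auto
  have hh: "C u 1 2 = -1" "C v 1 2 = -1" "C u 2 1 = -3" "C v 2 1 = -4 \<or> C v 2 1 = -5"
    using h unfolding c2_def by auto
  show "C v 2 1 = -4 \<Longrightarrow> pos_part {1,2} (R u) = {r2 1 0, r2 0 1, r2 1 1, r2 1 2, r2 1 3, r2 2 3, r2 3 4, r2 3 5}
             \<and> pos_part {1,2} (R v) = {r2 1 0, r2 0 1, r2 1 1, r2 1 2, r2 1 3, r2 1 4, r2 2 3, r2 2 5}"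
    using conc_134(1)[OF uv hh(1,3)] conc_143(1)[OF vu hh(2) _ hh(3)] by simp
  show "C v 2 1 = -5 \<Longrightarrow> pos_part {1,2} (R u) = {r2 1 0, r2 0 1, r2 1 1, r2 1 2, r2 1 3, r2 2 3, r2 3 4, r2 3 5,
                                       r2 4 5, r2 4 7, r2 5 7, r2 5 8}
             \<and> pos_part {1,2} (R v) = {r2 1 0, r2 0 1, r2 1 1, r2 1 2, r2 1 3, r2 1 4, r2 1 5, r2 2 3,
                                       r2 2 5, r2 2 7, r2 3 7, r2 3 8}"
    using conc_135(1)[OF uv hh(1,3)] conc_153(1)[OF vu hh(2) _ hh(3)] by simp
  show "finite (R u) \<and> finite (R v)"
    using hh(4)
  proof
    assume "C v 2 1 = -4"
    then show ?thesis using fin_pos[OF uv(1) conc_134(1)[OF uv hh(1,3)]] fin_pos[OF vu(1) conc_143(1)[OF vu hh(2) _ hh(3)]]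
      by simp
  next
    assume "C v 2 1 = -5"
    then show ?thesis using fin_pos[OF uv(1) conc_135(1)[OF uv hh(1,3)]] fin_pos[OF vu(1) conc_153(1)[OF vu hh(2) _ hh(3)]]
      by simp
  qed
qed

end

theorem proposition5p1:
  fixes x y :: 'a
    and \<rho> :: "nat \<Rightarrow> 'a \<Rightarrow> 'a"
    and C :: "'a \<Rightarrow> nat \<Rightarrow> nat \<Rightarrow> int"
    and R :: "'a \<Rightarrow> (nat \<Rightarrow> int) set"
  assumes xy: "x \<noteq> y"
    and rs: "root_system {1,2} {x,y} \<rho> C R"
    and rho1: "\<rho> 1 x = y" "\<rho> 1 y = x"
    and rho2: "\<forall>a\<in>{x,y}. \<rho> 2 a = a"
  defines "case1 \<equiv> \<lambda>u v. (\<forall>i\<in>{1,2}. \<forall>j\<in>{1,2}. C u i j = C v i j)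
              \<and> ((C u 1 2 = 0 \<and> C u 2 1 = 0) \<or> C u 1 2 * C u 2 1 \<in> {2,3})"
    and "case2 \<equiv> \<lambda>u v. C u 1 2 = -1 \<and> C v 1 2 = -1 \<and> C u 2 1 = -3 \<and> C v 2 1 \<in> {-4,-5}"
  shows "(finite_root_system {x,y} R \<longleftrightarrow>
            (\<exists>u v. {u,v} = {x,y} \<and> u \<noteq> v \<and> (case1 u v \<or> case2 u v)))
       \<and> (\<forall>u v. {u,v} = {x,y} \<and> u \<noteq> v \<longrightarrow>
            (case1 u v \<longrightarrow> R u = R v \<and> R u = gcm_roots {1,2} (C u))
          \<and> (case2 u v \<and> C v 2 1 = -4 \<longrightarrow>
               pos_part {1,2} (R u) = {r2 1 0, r2 0 1, r2 1 1, r2 1 2, r2 1 3, r2 2 3, r2 3 4, r2 3 5}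
             \<and> pos_part {1,2} (R v) = {r2 1 0, r2 0 1, r2 1 1, r2 1 2, r2 1 3, r2 1 4, r2 2 3, r2 2 5})
          \<and> (case2 u v \<and> C v 2 1 = -5 \<longrightarrow>
               pos_part {1,2} (R u) = {r2 1 0, r2 0 1, r2 1 1, r2 1 2, r2 1 3, r2 2 3, r2 3 4, r2 3 5,
                                       r2 4 5, r2 4 7, r2 5 7, r2 5 8}
             \<and> pos_part {1,2} (R v) = {r2 1 0, r2 0 1, r2 1 1, r2 1 2, r2 1 3, r2 1 4, r2 1 5, r2 2 3,
                                       r2 2 5, r2 2 7, r2 3 7, r2 3 8}))"
proof -
  interpret rs2 x y \<rho> C R using xy rs rho1 rho2 by unfold_locales
  have d1: "case1 = c1 C" unfolding assms(6) by (simp add: fun_eq_iff c1_def)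
  have d2: "case2 = c2 C" unfolding assms(7) by (simp add: fun_eq_iff c2_def)
  have uvin: "u \<in> {x,y} \<and> v \<in> {x,y}" if "{u,v} = {x,y}" for u v :: 'a using that by blast
  have all: "a \<in> {x,y} \<Longrightarrow> a \<in> {u,v}" if "{u,v} = {x,y}" for u v a :: 'a using that by blast
  have P1: "finite_root_system {x,y} R \<longleftrightarrow> (\<exists>u v. {u,v} = {x,y} \<and> u \<noteq> v \<and> (c1 C u v \<or> c2 C u v))"
  proof
    assume "finite_root_system {x,y} R"
    then have "finite (R x)" unfolding finite_root_system_def by simp
    then show "\<exists>u v. {u,v} = {x,y} \<and> u \<noteq> v \<and> (c1 C u v \<or> c2 C u v)" by (rule fwd)
  next
    assume "\<exists>u v. {u,v} = {x,y} \<and> u \<noteq> v \<and> (c1 C u v \<or> c2 C u v)"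
    then obtain u v where uv: "{u,v} = {x,y}" "u \<noteq> v" "c1 C u v \<or> c2 C u v" by blast
    have ui: "u \<in> {x,y}" "v \<in> {x,y}" using uvin[OF uv(1)] by auto
    have "finite (R u) \<and> finite (R v)"
      using uv(3) bwd1[OF ui uv(2)] bwd2(1)[OF ui uv(2)] by blast
    then show "finite_root_system {x,y} R" unfolding finite_root_system_def
      using all[OF uv(1)] by blast
  qed
  have P2: "\<forall>u v. {u,v} = {x,y} \<and> u \<noteq> v \<longrightarrow>
            (c1 C u v \<longrightarrow> R u = R v \<and> R u = gcm_roots {1,2} (C u))
          \<and> (c2 C u v \<and> C v 2 1 = -4 \<longrightarrow>
               pos_part {1,2} (R u) = {r2 1 0, r2 0 1, r2 1 1, r2 1 2, r2 1 3, r2 2 3, r2 3 4, r2 3 5}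
             \<and> pos_part {1,2} (R v) = {r2 1 0, r2 0 1, r2 1 1, r2 1 2, r2 1 3, r2 1 4, r2 2 3, r2 2 5})
          \<and> (c2 C u v \<and> C v 2 1 = -5 \<longrightarrow>
               pos_part {1,2} (R u) = {r2 1 0, r2 0 1, r2 1 1, r2 1 2, r2 1 3, r2 2 3, r2 3 4, r2 3 5,
                                       r2 4 5, r2 4 7, r2 5 7, r2 5 8}
             \<and> pos_part {1,2} (R v) = {r2 1 0, r2 0 1, r2 1 1, r2 1 2, r2 1 3, r2 1 4, r2 1 5, r2 2 3,
                                       r2 2 5, r2 2 7, r2 3 7, r2 3 8})"
  proof (intro allI impI conjI)
    fix u v assume uv: "{u,v} = {x,y} \<and> u \<noteq> v"
    have ui: "u \<in> {x,y}" "v \<in> {x,y}" "u \<noteq> v" using uvin uv by auto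
    show "c1 C u v \<Longrightarrow> R u = R v" using bwd1[OF ui] by blast
    show "c1 C u v \<Longrightarrow> R u = gcm_roots {1,2} (C u)" using bwd1[OF ui] by blast
    show "c2 C u v \<and> C v 2 1 = -4 \<Longrightarrow> pos_part {1,2} (R u) = {r2 1 0, r2 0 1, r2 1 1, r2 1 2, r2 1 3, r2 2 3, r2 3 4, r2 3 5}"
      using bwd2(2)[OF ui] by blast
    show "c2 C u v \<and> C v 2 1 = -4 \<Longrightarrow> pos_part {1,2} (R v) = {r2 1 0, r2 0 1, r2 1 1, r2 1 2, r2 1 3, r2 1 4, r2 2 3, r2 2 5}"
      using bwd2(2)[OF ui] by blast
    show "c2 C u v \<and> C v 2 1 = -5 \<Longrightarrow> pos_part {1,2} (R u) = {r2 1 0, r2 0 1, r2 1 1, r2 1 2, r2 1 3, r2 2 3, r2 3 4, r2 3 5,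
                                       r2 4 5, r2 4 7, r2 5 7, r2 5 8}"
      using bwd2(3)[OF ui] by blast
    show "c2 C u v \<and> C v 2 1 = -5 \<Longrightarrow> pos_part {1,2} (R v) = {r2 1 0, r2 0 1, r2 1 1, r2 1 2, r2 1 3, r2 1 4, r2 1 5, r2 2 3,
                                       r2 2 5, r2 2 7, r2 3 7, r2 3 8}"
      using bwd2(3)[OF ui] by blast
  qed
  show ?thesis unfolding d1 d2 using P1 P2 by blast
qed


end
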